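(* Consider the circuit that starts from $|\mathbf{0}\rangle\otimes|\psi\rangle$ (first register in the basis state of the trivial representation of $G$), applies $\mathcal{F}_G^{-1}$ to the first register (preparing $\frac{1}{\sqrt{|G|}}\sum_{g\in G}|g\rangle$), applies the controlled group action $U_R=\sum_{g\in G}|g\rangle\langle g|\otimes R(g)$, applies $\mathcal{F}_G$ to the first register, and measures the irrep label $\lambda$. If the input state $|\psi\rangle$ is invariant under the $R$-action of the hidden subgroup $H<G$, the outcome distribution is $$\mathrm{P}_{\mathrm{StateHSP}_\psi}[\lambda]=\frac{d_\lambda}{|G|}\sum_{c\in G/H}\sum_{h\in H}\chi_\lambda(ch)\,\langle\psi|R(c)|\psi\rangle,$$ where $\lambda$ ranges over the irreducible representations of $G$ and $G/H$ denotes a set of coset representatives.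
   Context: $G$ is a finite group with a unitary representation $R:G\to\mathrm{U}(d)$, and $|\psi\rangle\in\mathbb{C}^d$ satisfies $R(h)|\psi\rangle=|\psi\rangle$ for all $h\in H$. $\mathbb{C}^G=\mathrm{span}\{|g\rangle\}_{g\in G}$ is the regular-representation register with orthonormal basis. $\{\rho_\lambda\}$ is a complete set of unitary irreducible representations of $G$, $\rho_\lambda:G\to\mathrm{U}(d_\lambda)$, with characters $\chi_\lambda(g)=\mathrm{Tr}\,\rho_\lambda(g)$. The group Fourier transform is $\mathcal{F}_G|g\rangle=\sum_{\lambda,\,i,j\in[d_\lambda]}\sqrt{d_\lambda/|G|}\,\rho_\lambda(g)_{i,j}|\lambda,i,j\rangle$. *)

theory Defs
  imports "HOL-Algebra.Coset" "Jordan_Normal_Form.Schur_Decomposition"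
begin

definition mtrace :: "complex mat \<Rightarrow> complex" where
  "mtrace A = (\<Sum>i<dim_row A. A $$ (i, i))"

definition unitary_mat :: "nat \<Rightarrow> complex mat \<Rightarrow> bool" where
  "unitary_mat n U \<longleftrightarrow> U \<in> carrier_mat n n \<and> U * mat_adjoint U = 1\<^sub>m n"

definition braket :: "complex vec \<Rightarrow> complex vec \<Rightarrow> complex" where
  "braket v w = (\<Sum>k<dim_vec v. cnj (v $ k) * w $ k)"

definition is_rep :: "('g, 'b) monoid_scheme \<Rightarrow> nat \<Rightarrow> ('g \<Rightarrow> complex mat) \<Rightarrow> bool" where
  "is_rep G n \<rho> \<longleftrightarrow>
     (\<forall>g\<in>carrier G. \<rho> g \<in> carrier_mat n n) \<and>
     \<rho> \<one>\<^bsub>G\<^esub> = 1\<^sub>m n \<and>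
     (\<forall>g\<in>carrier G. \<forall>h\<in>carrier G. \<rho> (g \<otimes>\<^bsub>G\<^esub> h) = \<rho> g * \<rho> h)"

definition is_unitary_rep :: "('g, 'b) monoid_scheme \<Rightarrow> nat \<Rightarrow> ('g \<Rightarrow> complex mat) \<Rightarrow> bool" where
  "is_unitary_rep G n \<rho> \<longleftrightarrow> is_rep G n \<rho> \<and> (\<forall>g\<in>carrier G. unitary_mat n (\<rho> g))"

definition is_subspace :: "nat \<Rightarrow> complex vec set \<Rightarrow> bool" where
  "is_subspace n W \<longleftrightarrow> W \<subseteq> carrier_vec n \<and> 0\<^sub>v n \<in> W \<and>
     (\<forall>v\<in>W. \<forall>w\<in>W. v + w \<in> W) \<and> (\<forall>a. \<forall>v\<in>W. a \<cdot>\<^sub>v v \<in> W)"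

definition is_irrep :: "('g, 'b) monoid_scheme \<Rightarrow> nat \<Rightarrow> ('g \<Rightarrow> complex mat) \<Rightarrow> bool" where
  "is_irrep G n \<rho> \<longleftrightarrow> is_rep G n \<rho> \<and> n > 0 \<and>
     (\<forall>W. is_subspace n W \<and> (\<forall>g\<in>carrier G. \<forall>w\<in>W. \<rho> g *\<^sub>v w \<in> W)
          \<longrightarrow> W = {0\<^sub>v n} \<or> W = carrier_vec n)"

definition rep_equiv :: "('g, 'b) monoid_scheme \<Rightarrow> nat \<Rightarrow> ('g \<Rightarrow> complex mat) \<Rightarrow> nat \<Rightarrow> ('g \<Rightarrow> complex mat) \<Rightarrow> bool" where
  "rep_equiv G n \<rho> m \<sigma> \<longleftrightarrow> n = m \<and>
     (\<exists>T \<in> carrier_mat n n. invertible_mat T \<and> (\<forall>g\<in>carrier G. T * \<rho> g = \<sigma> g * T))"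

definition complete_irreps :: "('g, 'b) monoid_scheme \<Rightarrow> 'l set \<Rightarrow> ('l \<Rightarrow> nat) \<Rightarrow> ('l \<Rightarrow> 'g \<Rightarrow> complex mat) \<Rightarrow> bool" where
  "complete_irreps G L dl \<rho> \<longleftrightarrow>
     (\<forall>l\<in>L. is_unitary_rep G (dl l) (\<rho> l) \<and> is_irrep G (dl l) (\<rho> l)) \<and>
     (\<forall>l\<in>L. \<forall>l'\<in>L. l \<noteq> l' \<longrightarrow> \<not> rep_equiv G (dl l) (\<rho> l) (dl l') (\<rho> l')) \<and>
     (\<forall>(n::nat) \<sigma>. is_irrep G n \<sigma> \<longrightarrow> (\<exists>l\<in>L. rep_equiv G n \<sigma> (dl l) (\<rho> l)))"

(* ---------- the circuit ----------
   A state of C^G (x) C^d is a function  g k  (g in carrier G, k < d).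
   A state of (Fourier register) (x) C^d is a function  l i j k
   (l in L, i,j < dl l, k < d). *)

definition fourier :: "('g, 'b) monoid_scheme \<Rightarrow> ('l \<Rightarrow> nat) \<Rightarrow> ('l \<Rightarrow> 'g \<Rightarrow> complex mat)
     \<Rightarrow> ('g \<Rightarrow> nat \<Rightarrow> complex) \<Rightarrow> ('l \<Rightarrow> nat \<Rightarrow> nat \<Rightarrow> nat \<Rightarrow> complex)" where
  "fourier G dl \<rho> \<Phi> = (\<lambda>l i j k.
     \<Sum>g\<in>carrier G. complex_of_real (sqrt (real (dl l) / real (card (carrier G))))
                     * (\<rho> l g $$ (i, j)) * \<Phi> g k)"

definition fourier_inv :: "('g, 'b) monoid_scheme \<Rightarrow> 'l set \<Rightarrow> ('l \<Rightarrow> nat) \<Rightarrow> ('l \<Rightarrow> 'g \<Rightarrow> complex mat)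
     \<Rightarrow> ('l \<Rightarrow> nat \<Rightarrow> nat \<Rightarrow> nat \<Rightarrow> complex) \<Rightarrow> ('g \<Rightarrow> nat \<Rightarrow> complex)" where
  "fourier_inv G L dl \<rho> \<Psi> = (\<lambda>g k.
     \<Sum>l\<in>L. \<Sum>i<dl l. \<Sum>j<dl l.
        complex_of_real (sqrt (real (dl l) / real (card (carrier G))))
        * cnj (\<rho> l g $$ (i, j)) * \<Psi> l i j k)"

definition ctrl_action :: "nat \<Rightarrow> ('g \<Rightarrow> complex mat) \<Rightarrow> ('g \<Rightarrow> nat \<Rightarrow> complex) \<Rightarrow> ('g \<Rightarrow> nat \<Rightarrow> complex)" where
  "ctrl_action d R \<Phi> = (\<lambda>g k. \<Sum>k'<d. R g $$ (k, k') * \<Phi> g k')"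

(* initial state |0> (x) |psi>, where |0> = |l0,0,0> is the basis state of the
   (one-dimensional) trivial representation l0 *)
definition init_state :: "'l \<Rightarrow> complex vec \<Rightarrow> ('l \<Rightarrow> nat \<Rightarrow> nat \<Rightarrow> nat \<Rightarrow> complex)" where
  "init_state l0 \<psi> = (\<lambda>l i j k.
     if l = l0 \<and> i = 0 \<and> j = 0 \<and> k < dim_vec \<psi> then \<psi> $ k else 0)"

definition stateHSP_final ::
  "('g, 'b) monoid_scheme \<Rightarrow> 'l set \<Rightarrow> ('l \<Rightarrow> nat) \<Rightarrow> ('l \<Rightarrow> 'g \<Rightarrow> complex mat) \<Rightarrow> 'l
     \<Rightarrow> ('g \<Rightarrow> complex mat) \<Rightarrow> complex vec \<Rightarrow> ('l \<Rightarrow> nat \<Rightarrow> nat \<Rightarrow> nat \<Rightarrow> complex)" where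
  "stateHSP_final G L dl \<rho> l0 R \<psi> =
     fourier G dl \<rho> (ctrl_action (dim_vec \<psi>) R (fourier_inv G L dl \<rho> (init_state l0 \<psi>)))"

definition prob_stateHSP ::
  "('g, 'b) monoid_scheme \<Rightarrow> 'l set \<Rightarrow> ('l \<Rightarrow> nat) \<Rightarrow> ('l \<Rightarrow> 'g \<Rightarrow> complex mat) \<Rightarrow> 'l
     \<Rightarrow> ('g \<Rightarrow> complex mat) \<Rightarrow> complex vec \<Rightarrow> 'l \<Rightarrow> real" where
  "prob_stateHSP G L dl \<rho> l0 R \<psi> l =
     (\<Sum>i<dl l. \<Sum>j<dl l. \<Sum>k<dim_vec \<psi>.
        (cmod (stateHSP_final G L dl \<rho> l0 R \<psi> l i j k))\<^sup>2)"

end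

theory Submission
  imports Defs
begin

lemma adj_carrier: "A \<in> carrier_mat n n \<Longrightarrow> mat_adjoint A \<in> carrier_mat n n"
  unfolding mat_adjoint_def by auto

lemma adj_index: "A \<in> carrier_mat n n \<Longrightarrow> i < n \<Longrightarrow> j < n \<Longrightarrow> mat_adjoint A $$ (i,j) = cnj (A $$ (j,i))"
  unfolding mat_adjoint_def by (auto simp: mat_of_rows_index)

lemma rep_inv_adj:
  assumes "group G" "is_unitary_rep G n \<rho>" "g \<in> carrier G"
  shows "\<rho> (inv\<^bsub>G\<^esub> g) = mat_adjoint (\<rho> g)"
proof -
  interpret group G by fact
  let ?U = "\<rho> g" and ?W = "\<rho> (inv\<^bsub>G\<^esub> g)"
  have U: "?U \<in> carrier_mat n n" and W: "?W \<in> carrier_mat n n"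
    using assms unfolding is_unitary_rep_def is_rep_def by auto
  have A: "mat_adjoint ?U \<in> carrier_mat n n" using adj_carrier[OF U] .
  have WU: "?W * ?U = 1\<^sub>m n" using assms unfolding is_unitary_rep_def is_rep_def
    by (metis inv_closed l_inv)
  have UA: "?U * mat_adjoint ?U = 1\<^sub>m n" using assms unfolding is_unitary_rep_def unitary_mat_def by auto
  have "mat_adjoint ?U = (?W * ?U) * mat_adjoint ?U" using WU A by simp
  also have "\<dots> = ?W * (?U * mat_adjoint ?U)" using U W A by (simp add: assoc_mult_mat)
  also have "\<dots> = ?W" using UA W by simp
  finally show ?thesis by simp
qed

lemma trace_form:
  assumes A: "A \<in> carrier_mat n n" and B: "B \<in> carrier_mat n n"
  shows "(\<Sum>i<n. \<Sum>j<n. A $$ (i,j) * cnj (B $$ (i,j))) = mtrace (mat_adjoint B * A)"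
proof -
  have BA: "mat_adjoint B \<in> carrier_mat n n" using adj_carrier[OF B] .
  have "mtrace (mat_adjoint B * A) = (\<Sum>i<n. \<Sum>j<n. cnj (B $$ (j,i)) * A $$ (j,i))"
    unfolding mtrace_def using A BA
    by (auto simp: scalar_prod_def adj_index[OF B] intro!: sum.cong)
  also have "\<dots> = (\<Sum>j<n. \<Sum>i<n. cnj (B $$ (j,i)) * A $$ (j,i))" by (rule sum.swap)
  finally show ?thesis by (simp add: mult.commute)
qed

lemma braket_form:
  assumes U: "U \<in> carrier_mat n n" and p: "p \<in> carrier_vec n" and w: "w \<in> carrier_vec n"
  shows "(\<Sum>k<n. w $ k * cnj ((U *\<^sub>v p) $ k)) = braket p (mat_adjoint U *\<^sub>v w)"
proof -
  have UA: "mat_adjoint U \<in> carrier_mat n n" using adj_carrier[OF U] .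
  have "(\<Sum>k<n. w $ k * cnj ((U *\<^sub>v p) $ k)) = (\<Sum>k<n. \<Sum>j<n. w $ k * cnj (U $$ (k,j)) * cnj (p $ j))"
    using U p by (auto simp: scalar_prod_def sum_distrib_left mult.assoc intro!: sum.cong)
  also have "\<dots> = (\<Sum>j<n. \<Sum>k<n. w $ k * cnj (U $$ (k,j)) * cnj (p $ j))" by (rule sum.swap)
  also have "\<dots> = braket p (mat_adjoint U *\<^sub>v w)"
    unfolding braket_def using UA p w
    by (auto simp: scalar_prod_def sum_distrib_left adj_index[OF U] intro!: sum.cong)
  finally show ?thesis .
qed


lemma swap3: "(\<Sum>a\<in>A. \<Sum>b\<in>B. \<Sum>c\<in>C. f a b c) = (\<Sum>b\<in>B. \<Sum>c\<in>C. \<Sum>a\<in>A. f a b c)"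
proof -
  have "(\<Sum>a\<in>A. \<Sum>b\<in>B. \<Sum>c\<in>C. f a b c) = (\<Sum>b\<in>B. \<Sum>a\<in>A. \<Sum>c\<in>C. f a b c)" by (rule sum.swap)
  also have "\<dots> = (\<Sum>b\<in>B. \<Sum>c\<in>C. \<Sum>a\<in>A. f a b c)" by (rule sum.cong[OF refl], rule sum.swap)
  finally show ?thesis .
qed

lemma sum3_factor: "(\<Sum>i\<in>I. \<Sum>j\<in>J. \<Sum>k\<in>K. (c::complex) * (A i j * B k)) = c * ((\<Sum>i\<in>I. \<Sum>j\<in>J. A i j) * (\<Sum>k\<in>K. B k))"
proof -
  have a: "(\<Sum>i\<in>I. \<Sum>j\<in>J. c * (A i j * S)) = c * ((\<Sum>i\<in>I. \<Sum>j\<in>J. A i j) * S)" for S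
    by (simp add: sum_distrib_left sum_distrib_right mult.assoc)
  have "(\<Sum>i\<in>I. \<Sum>j\<in>J. \<Sum>k\<in>K. c * (A i j * B k)) = (\<Sum>i\<in>I. \<Sum>j\<in>J. c * (A i j * sum B K))"
    by (simp add: sum_distrib_left)
  then show ?thesis using a by simp
qed

theorem fact3p4:
  fixes G :: "('g, 'b) monoid_scheme"
    and H :: "'g set"
    and R :: "'g \<Rightarrow> complex mat"
    and \<psi> :: "complex vec"
    and d :: nat
    and L :: "'l set"
    and dl :: "'l \<Rightarrow> nat"
    and \<rho> :: "'l \<Rightarrow> 'g \<Rightarrow> complex mat"
    and l0 :: 'l
    and C :: "'g set"
    and l :: 'l
  assumes grp: "group G"
    and fin: "finite (carrier G)"
    and sub: "subgroup H G"
    and R_rep: "is_unitary_rep G d R"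
    and psi_dim: "\<psi> \<in> carrier_vec d"
    and psi_norm: "(\<Sum>k<d. (cmod (\<psi> $ k))\<^sup>2) = 1"
    and psi_inv: "\<forall>h\<in>H. R h *\<^sub>v \<psi> = \<psi>"
    and irreps: "complete_irreps G L dl \<rho>"
    and finL: "finite L"
    and triv: "l0 \<in> L" "dl l0 = 1" "\<forall>g\<in>carrier G. \<rho> l0 g = 1\<^sub>m 1"
    and reps: "C \<subseteq> carrier G" "\<forall>g\<in>carrier G. \<exists>!c\<in>C. g \<in> c <#\<^bsub>G\<^esub> H"
    and lL: "l \<in> L"
  shows "complex_of_real (prob_stateHSP G L dl \<rho> l0 R \<psi> l)
     = complex_of_real (real (dl l) / real (card (carrier G)))
       * (\<Sum>c\<in>C. \<Sum>h\<in>H. mtrace (\<rho> l (c \<otimes>\<^bsub>G\<^esub> h)) * braket \<psi> (R c *\<^sub>v \<psi>))"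
  proof -
  interpret group G by fact
  define n where "n = card (carrier G)"
  have npos: "n > 0" unfolding n_def using fin subgroup.one_closed[OF sub] subgroup.subset[OF sub] by (auto simp: card_gt_0_iff)
  have d_eq: "dim_vec \<psi> = d" using psi_dim by simp
  define v where "v g = R g *\<^sub>v \<psi>" for g
  define s where "s = sqrt (1 / real n)"
  define c0 where "c0 = sqrt (real (dl l) / real n) * s"
  define \<Phi> where "\<Phi> = ctrl_action (dim_vec \<psi>) R (fourier_inv G L dl \<rho> (init_state l0 \<psi>))"
  have Rc: "R g \<in> carrier_mat d d" if "g \<in> carrier G" for g
    using R_rep that unfolding is_unitary_rep_def is_rep_def by auto
  have rc: "\<rho> l g \<in> carrier_mat (dl l) (dl l)" if "g \<in> carrier G" for g
    using irreps lL that unfolding complete_irreps_def is_unitary_rep_def is_rep_def by auto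
  have rl: "is_unitary_rep G (dl l) (\<rho> l)" using irreps lL unfolding complete_irreps_def by auto
  have finv: "fourier_inv G L dl \<rho> (init_state l0 \<psi>) g k' = (if k' < d then of_real s * \<psi> $ k' else 0)"
    if g: "g \<in> carrier G" for g k'
  proof -
    have "fourier_inv G L dl \<rho> (init_state l0 \<psi>) g k' =
      (\<Sum>l'\<in>{l0}. \<Sum>i<dl l'. \<Sum>j<dl l'. complex_of_real (sqrt (real (dl l') / real (card (carrier G))))
        * cnj (\<rho> l' g $$ (i, j)) * init_state l0 \<psi> l' i j k')"
      unfolding fourier_inv_def
      by (rule sum.mono_neutral_right[OF finL]) (auto simp: triv init_state_def)
    also have "\<dots> = (if k' < d then of_real s * \<psi> $ k' else 0)"
      using g by (simp add: triv init_state_def s_def n_def d_eq)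
    finally show ?thesis .
  qed
  have ctrl: "\<Phi> g k = of_real s * v g $ k" if g: "g \<in> carrier G" and k: "k < d" for g k
  proof -
    have "\<Phi> g k = (\<Sum>k'<d. R g $$ (k, k') * (of_real s * \<psi> $ k'))"
      unfolding \<Phi>_def ctrl_action_def d_eq using g by (simp add: finv)
    also have "\<dots> = of_real s * v g $ k"
      unfolding v_def using Rc[OF g] k psi_dim
      by (simp add: scalar_prod_def sum_distrib_left atLeast0LessThan ac_simps)
    finally show ?thesis .
  qed
  have final: "stateHSP_final G L dl \<rho> l0 R \<psi> l i j k
      = (\<Sum>g\<in>carrier G. of_real c0 * (\<rho> l g $$ (i, j) * v g $ k))" if k: "k < d" for i j k
    unfolding stateHSP_final_def \<Phi>_def[symmetric] fourier_def
    by (rule sum.cong[OF refl]) (simp add: ctrl k c0_def n_def)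
  define F where "F a = mtrace (\<rho> l a) * braket \<psi> (R a *\<^sub>v \<psi>)" for a
  have P1: "complex_of_real (prob_stateHSP G L dl \<rho> l0 R \<psi> l) = (\<Sum>i<dl l. \<Sum>j<dl l. \<Sum>k<d.
      \<Sum>g\<in>carrier G. \<Sum>g'\<in>carrier G. of_real (c0^2) *
        ((\<rho> l g $$ (i,j) * cnj (\<rho> l g' $$ (i,j))) * (v g $ k * cnj (v g' $ k))))"
  proof -
    have "complex_of_real (prob_stateHSP G L dl \<rho> l0 R \<psi> l) = (\<Sum>i<dl l. \<Sum>j<dl l. \<Sum>k<d.
       complex_of_real ((cmod (stateHSP_final G L dl \<rho> l0 R \<psi> l i j k))\<^sup>2))"
      by (simp add: prob_stateHSP_def d_eq)
    also have "\<dots> = (\<Sum>i<dl l. \<Sum>j<dl l. \<Sum>k<d.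
      \<Sum>g\<in>carrier G. \<Sum>g'\<in>carrier G. of_real (c0^2) *
        ((\<rho> l g $$ (i,j) * cnj (\<rho> l g' $$ (i,j))) * (v g $ k * cnj (v g' $ k))))"
    proof (intro sum.cong refl)
      fix i j k assume "k \<in> {..<d}"
      hence k: "k < d" by simp
      show "complex_of_real ((cmod (stateHSP_final G L dl \<rho> l0 R \<psi> l i j k))\<^sup>2) =
        (\<Sum>g\<in>carrier G. \<Sum>g'\<in>carrier G. of_real (c0^2) *
        ((\<rho> l g $$ (i,j) * cnj (\<rho> l g' $$ (i,j))) * (v g $ k * cnj (v g' $ k))))"
        unfolding complex_norm_square final[OF k] cnj_sum sum_product
        by (intro sum.cong refl) (simp add: power2_eq_square ac_simps)
    qed
    finally show ?thesis .
  qed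
  have P2: "complex_of_real (prob_stateHSP G L dl \<rho> l0 R \<psi> l) = (\<Sum>g\<in>carrier G. \<Sum>g'\<in>carrier G.
      \<Sum>i<dl l. \<Sum>j<dl l. \<Sum>k<d. of_real (c0^2) *
        ((\<rho> l g $$ (i,j) * cnj (\<rho> l g' $$ (i,j))) * (v g $ k * cnj (v g' $ k))))"
    unfolding P1
    apply (subst swap3[where A="{..<d}" and B="carrier G" and C="carrier G"])
    apply (subst swap3[where A="{..<dl l}" and B="carrier G" and C="carrier G"])
    apply (subst swap3[where A="{..<dl l}" and B="carrier G" and C="carrier G"])
    apply (rule refl)
    done
  have P3: "complex_of_real (prob_stateHSP G L dl \<rho> l0 R \<psi> l) = (\<Sum>g\<in>carrier G. \<Sum>g'\<in>carrier G.
      of_real (c0^2) * F (inv\<^bsub>G\<^esub> g' \<otimes>\<^bsub>G\<^esub> g))"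
    unfolding P2
  proof (intro sum.cong refl)
    fix g g' assume g: "g \<in> carrier G" and g': "g' \<in> carrier G"
    have e1: "(\<Sum>i<dl l. \<Sum>j<dl l. \<rho> l g $$ (i,j) * cnj (\<rho> l g' $$ (i,j))) = mtrace (\<rho> l (inv\<^bsub>G\<^esub> g' \<otimes>\<^bsub>G\<^esub> g))"
      using trace_form[OF rc[OF g] rc[OF g']] rep_inv_adj[OF grp rl g'] rl g g'
      unfolding is_unitary_rep_def is_rep_def by auto
    have e2: "(\<Sum>k<d. v g $ k * cnj (v g' $ k)) = braket \<psi> (R (inv\<^bsub>G\<^esub> g' \<otimes>\<^bsub>G\<^esub> g) *\<^sub>v \<psi>)"
    proof -
      have "R (inv\<^bsub>G\<^esub> g' \<otimes>\<^bsub>G\<^esub> g) = mat_adjoint (R g') * R g"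
        using rep_inv_adj[OF grp R_rep g'] R_rep g g' unfolding is_unitary_rep_def is_rep_def by auto
      hence "R (inv\<^bsub>G\<^esub> g' \<otimes>\<^bsub>G\<^esub> g) *\<^sub>v \<psi> = mat_adjoint (R g') *\<^sub>v (R g *\<^sub>v \<psi>)"
        using assoc_mult_mat_vec[OF adj_carrier[OF Rc[OF g']] Rc[OF g] psi_dim] by simp
      thus ?thesis using braket_form[OF Rc[OF g'] psi_dim, of "R g *\<^sub>v \<psi>"] Rc[OF g] psi_dim
        unfolding v_def by auto
    qed
    show "(\<Sum>i<dl l. \<Sum>j<dl l. \<Sum>k<d. of_real (c0^2) *
        ((\<rho> l g $$ (i,j) * cnj (\<rho> l g' $$ (i,j))) * (v g $ k * cnj (v g' $ k))))
       = of_real (c0^2) * F (inv\<^bsub>G\<^esub> g' \<otimes>\<^bsub>G\<^esub> g)"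
      unfolding sum3_factor e1 e2 F_def ..
  qed
  have inner: "(\<Sum>g\<in>carrier G. F (inv\<^bsub>G\<^esub> g' \<otimes>\<^bsub>G\<^esub> g)) = (\<Sum>a\<in>carrier G. F a)"
    if g': "g' \<in> carrier G" for g'
    by (rule sum.reindex_bij_witness[where i="\<lambda>a. g' \<otimes>\<^bsub>G\<^esub> a" and j="\<lambda>g. inv\<^bsub>G\<^esub> g' \<otimes>\<^bsub>G\<^esub> g"])
       (use g' in \<open>auto simp: m_assoc[symmetric]\<close>)
  have P4: "complex_of_real (prob_stateHSP G L dl \<rho> l0 R \<psi> l) = of_real (c0^2) * of_nat n * (\<Sum>a\<in>carrier G. F a)"
  proof -
    have "complex_of_real (prob_stateHSP G L dl \<rho> l0 R \<psi> l) = (\<Sum>g'\<in>carrier G. \<Sum>g\<in>carrier G.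
      of_real (c0^2) * F (inv\<^bsub>G\<^esub> g' \<otimes>\<^bsub>G\<^esub> g))" unfolding P3 by (rule sum.swap)
    also have "\<dots> = (\<Sum>g'\<in>carrier G. of_real (c0^2) * (\<Sum>a\<in>carrier G. F a))"
      by (intro sum.cong refl) (simp add: sum_distrib_left[symmetric] inner)
    also have "\<dots> = of_real (c0^2) * of_nat n * (\<Sum>a\<in>carrier G. F a)" by (simp add: n_def)
    finally show ?thesis .
  qed
  have Hs: "H \<subseteq> carrier G" using subgroup.subset[OF sub] .
  have bij: "bij_betw (\<lambda>(c,h). c \<otimes>\<^bsub>G\<^esub> h) (C \<times> H) (carrier G)"
  proof (rule bij_betwI')
    fix x y assume x: "x \<in> C \<times> H" and y: "y \<in> C \<times> H"
    obtain c h where xe: "x = (c,h)" and c: "c \<in> C" and h: "h \<in> H" using x by auto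
    obtain c' h' where ye: "y = (c',h')" and c': "c' \<in> C" and h': "h' \<in> H" using y by auto
    show "((case x of (c, h) \<Rightarrow> c \<otimes>\<^bsub>G\<^esub> h) = (case y of (c, h) \<Rightarrow> c \<otimes>\<^bsub>G\<^esub> h)) = (x = y)"
    proof
      assume eq: "(case x of (c, h) \<Rightarrow> c \<otimes>\<^bsub>G\<^esub> h) = (case y of (c, h) \<Rightarrow> c \<otimes>\<^bsub>G\<^esub> h)"
      hence eq': "c \<otimes>\<^bsub>G\<^esub> h = c' \<otimes>\<^bsub>G\<^esub> h'" using xe ye by simp
      have cG: "c \<in> carrier G" "c' \<in> carrier G" using c c' reps(1) by auto
      have hG: "h \<in> carrier G" "h' \<in> carrier G" using h h' Hs by auto
      have m1: "c \<otimes>\<^bsub>G\<^esub> h \<in> c <#\<^bsub>G\<^esub> H" using h unfolding l_coset_def by auto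
      have m2: "c \<otimes>\<^bsub>G\<^esub> h \<in> c' <#\<^bsub>G\<^esub> H" using h' eq' unfolding l_coset_def by auto
      have "c = c'" using reps(2) m1 m2 c c' cG hG by (metis m_closed)
      moreover have "h = h'" using eq' \<open>c = c'\<close> cG hG by simp
      ultimately show "x = y" using xe ye by simp
    qed simp
  next
    fix x assume "x \<in> C \<times> H"
    thus "(case x of (c, h) \<Rightarrow> c \<otimes>\<^bsub>G\<^esub> h) \<in> carrier G" using reps(1) Hs by auto
  next
    fix g assume g: "g \<in> carrier G"
    then obtain c where c: "c \<in> C" and gc: "g \<in> c <#\<^bsub>G\<^esub> H" using reps(2) by blast
    then obtain h where h: "h \<in> H" and "g = c \<otimes>\<^bsub>G\<^esub> h" unfolding l_coset_def by auto
    thus "\<exists>x\<in>C \<times> H. g = (case x of (c, h) \<Rightarrow> c \<otimes>\<^bsub>G\<^esub> h)" using c by auto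
  qed
  have P5: "(\<Sum>a\<in>carrier G. F a) = (\<Sum>c\<in>C. \<Sum>h\<in>H. mtrace (\<rho> l (c \<otimes>\<^bsub>G\<^esub> h)) * braket \<psi> (R c *\<^sub>v \<psi>))"
  proof -
    have "(\<Sum>a\<in>carrier G. F a) = (\<Sum>x\<in>C \<times> H. F (case x of (c, h) \<Rightarrow> c \<otimes>\<^bsub>G\<^esub> h))"
      using sum.reindex_bij_betw[OF bij, of F] by simp
    also have "\<dots> = (\<Sum>c\<in>C. \<Sum>h\<in>H. F (c \<otimes>\<^bsub>G\<^esub> h))"
      by (simp add: sum.cartesian_product split_def)
    also have "\<dots> = (\<Sum>c\<in>C. \<Sum>h\<in>H. mtrace (\<rho> l (c \<otimes>\<^bsub>G\<^esub> h)) * braket \<psi> (R c *\<^sub>v \<psi>))"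
    proof (intro sum.cong refl)
      fix c h assume c: "c \<in> C" and h: "h \<in> H"
      have cG: "c \<in> carrier G" and hG: "h \<in> carrier G" using c h reps(1) Hs by auto
      have "R (c \<otimes>\<^bsub>G\<^esub> h) *\<^sub>v \<psi> = R c *\<^sub>v (R h *\<^sub>v \<psi>)"
        using R_rep cG hG assoc_mult_mat_vec[OF Rc[OF cG] Rc[OF hG] psi_dim]
        unfolding is_unitary_rep_def is_rep_def by auto
      also have "\<dots> = R c *\<^sub>v \<psi>" using psi_inv h by simp
      finally show "F (c \<otimes>\<^bsub>G\<^esub> h) = mtrace (\<rho> l (c \<otimes>\<^bsub>G\<^esub> h)) * braket \<psi> (R c *\<^sub>v \<psi>)"
        unfolding F_def by simp
    qed
    finally show ?thesis .
  qed
  have cst: "complex_of_real (c0^2) * of_nat n = complex_of_real (real (dl l) / real (card (carrier G)))"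
  proof -
    have "c0^2 * real n = real (dl l) / real n"
    proof -
      have "c0^2 = real (dl l) / real n * (1 / real n)"
        unfolding c0_def s_def by (simp add: power_mult_distrib)
      thus ?thesis using npos by (simp add: field_simps power2_eq_square)
    qed
    hence "complex_of_real (c0^2 * real n) = complex_of_real (real (dl l) / real n)" by simp
    thus ?thesis by (simp add: n_def)
  qed
  show ?thesis unfolding P4 P5 cst ..
qed

end
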